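(* Let $X$ be a finite $T_0$ topological space, $\mathcal V$ a multivector field on $X$ with $X$ invariant, $\mathcal M=\{M_p\mid p\in\mathbb P\}$ a Morse predecomposition of $X$, and $\le$ an admissible preorder on $\mathbb P$. Then for every $\mathbb Q\subset\mathbb P$ the set $M_{\mathbb Q}$ is a saturated isolated invariant set. Moreover, if $\mathbb Q$ is convex with respect to $\le$, then $M_{\mathbb Q}\cap M_r=\emptyset$ for all $r\in\mathbb P\setminus\mathbb Q$.
   Context: Notation: $\operatorname{cl}$ is closure; $A\subset X$ is locally closed if $\operatorname{cl}A\setminus A$ is closed. A multivector field $\mathcal V$ on $X$ is a partition of $X$ into locally closed sets (multivectors); $[x]_{\mathcal V}$ is the multivector containing $x$. A multivector $V$ is critical if $H(\operatorname{cl}V,\operatorname{cl}V\setminus V)$ (relative singular homology) is nontrivial, regular otherwise. $A$ is $\mathcal V$-compatible if it is a union of multivectors; $\langle A\rangle_{\mathcal V}$ is the smallest locally closed $\mathcal V$-compatible set containing $A$. $\Pi_{\mathcal V}(x)=\operatorname{cl}\{x\}\cup[x]_{\mathcal V}$. A solution is a partial map $\gamma:\mathbb Z\nrightarrow X$ with domain an integer interval and $\gamma(t+1)\in\Pi_{\mathcal V}(\gamma(t))$; a path has finite domain; a full solution has domain $\mathbb Z$. $\alpha(\gamma)=\langle\bigcap_{t\le0}\gamma((-\infty,t])\rangle_{\mathcal V}$, $\omega(\gamma)=\langle\bigcap_{t\ge0}\gamma([t,\infty))\rangle_{\mathcal V}$. A full solution is essential unless $\alpha(\gamma)$ or $\omega(\gamma)$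 lies in a single regular multivector; an essential solution in $A$ has image in $A$. $\operatorname{Inv}S$ is the set of $x\in S$ with an essential solution $\gamma$ in $S$, $\gamma(0)=x$; $S$ is invariant if $\operatorname{Inv}S=S$. An invariant $S$ is isolated invariant if there is a closed $N\supset\Pi_{\mathcal V}(S)$ such that every path in $N$ with endpoints in $S$ has image in $S$. A link from $S_1$ to $S_2$ is a full solution with $\alpha(\gamma)\cap S_1\ne\emptyset\ne\omega(\gamma)\cap S_2$. A Morse predecomposition of $X$ is an indexed family $\{M_p\mid p\in\mathbb P\}$ of mutually disjoint isolated invariant subsets such that every essential solution in $X$ is a link from some $M_p$ to some $M_q$. A preorder $\le$ on $\mathbb P$ is admissible if a link from $M_p$ to $M_q$ implies $q\le p$; $\mathbb Q$ is convex w.r.t. $\le$ if $p\le r\le q$, $p,q\in\mathbb Q$ imply $r\in\mathbb Q$. An invariant $T\subset X$ is saturated if every essential solution $\gamma$ in $X$ with $\alpha(\gamma)\cup\omega(\gamma)\subset T$ has $\operatorname{im}\gamma\subset T$. $\mathbb P_C=\{p\mid M_p\cap C\ne\emptyset\}$; $\operatorname{eSol}_{\mathbb Q}(X)$ is the set of essential solutions $\gamma$ in $X$ with $\mathbb P_{\alpha(\gamma)}\cap\mathbb Q\ne\emptyset\ne\mathbb P_{\omega(\gamma)}\cap\mathbb Q$; $M_{\mathbb Q}=\bigcup\{\operatorname{im}\gamma\mid\gamma\in\operatorname{eSol}_{\mathbb Q}(X)\}$. *)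

theory Defs
  imports "HOL-Analysis.Analysis" "HOL-Homology.Homology"
begin

definition locally_closed_in :: "'a topology \<Rightarrow> 'a set \<Rightarrow> bool" where
  "locally_closed_in X A \<longleftrightarrow> closedin X (X closure_of A - A)"

definition multivector_field :: "'a topology \<Rightarrow> 'a set set \<Rightarrow> bool" where
  "multivector_field X V \<longleftrightarrow>
     (\<forall>A\<in>V. A \<noteq> {} \<and> A \<subseteq> topspace X \<and> locally_closed_in X A) \<and>
     (\<forall>A\<in>V. \<forall>B\<in>V. A \<noteq> B \<longrightarrow> A \<inter> B = {}) \<and>
     \<Union>V = topspace X"

definition mv_of :: "'a set set \<Rightarrow> 'a \<Rightarrow> 'a set" where
  "mv_of V x = (THE A. A \<in> V \<and> x \<in> A)"

definition critical_mv :: "'a topology \<Rightarrow> 'a set \<Rightarrow> bool" where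
  "critical_mv X A \<longleftrightarrow>
     (\<exists>p. \<not> trivial_group
             (relative_homology_group p (subtopology X (X closure_of A)) (X closure_of A - A)))"

definition regular_mv :: "'a topology \<Rightarrow> 'a set \<Rightarrow> bool" where
  "regular_mv X A \<longleftrightarrow> \<not> critical_mv X A"

definition compatible :: "'a set set \<Rightarrow> 'a set \<Rightarrow> bool" where
  "compatible V A \<longleftrightarrow> (\<exists>W \<subseteq> V. A = \<Union>W)"

definition lc_hull :: "'a topology \<Rightarrow> 'a set set \<Rightarrow> 'a set \<Rightarrow> 'a set" where
  "lc_hull X V A = \<Inter>{B. A \<subseteq> B \<and> B \<subseteq> topspace X \<and> locally_closed_in X B \<and> compatible V B}"

definition Pi_mv :: "'a topology \<Rightarrow> 'a set set \<Rightarrow> 'a \<Rightarrow> 'a set" where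
  "Pi_mv X V x = X closure_of {x} \<union> mv_of V x"

definition Pi_mv_set :: "'a topology \<Rightarrow> 'a set set \<Rightarrow> 'a set \<Rightarrow> 'a set" where
  "Pi_mv_set X V S = (\<Union>x\<in>S. Pi_mv X V x)"

definition is_path :: "'a topology \<Rightarrow> 'a set set \<Rightarrow> (int \<Rightarrow> 'a) \<Rightarrow> int \<Rightarrow> int \<Rightarrow> bool" where
  "is_path X V \<gamma> a b \<longleftrightarrow> a \<le> b \<and> (\<forall>t\<in>{a..b}. \<gamma> t \<in> topspace X) \<and>
     (\<forall>t\<in>{a..<b}. \<gamma> (t + 1) \<in> Pi_mv X V (\<gamma> t))"

definition full_solution :: "'a topology \<Rightarrow> 'a set set \<Rightarrow> (int \<Rightarrow> 'a) \<Rightarrow> bool" where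
  "full_solution X V \<gamma> \<longleftrightarrow> (\<forall>t. \<gamma> t \<in> topspace X \<and> \<gamma> (t + 1) \<in> Pi_mv X V (\<gamma> t))"

definition alpha_limit :: "'a topology \<Rightarrow> 'a set set \<Rightarrow> (int \<Rightarrow> 'a) \<Rightarrow> 'a set" where
  "alpha_limit X V \<gamma> = lc_hull X V (\<Inter>t\<in>{..0}. \<gamma> ` {..t})"

definition omega_limit :: "'a topology \<Rightarrow> 'a set set \<Rightarrow> (int \<Rightarrow> 'a) \<Rightarrow> 'a set" where
  "omega_limit X V \<gamma> = lc_hull X V (\<Inter>t\<in>{0..}. \<gamma> ` {t..})"

definition in_single_regular_mv :: "'a topology \<Rightarrow> 'a set set \<Rightarrow> 'a set \<Rightarrow> bool" where
  "in_single_regular_mv X V C \<longleftrightarrow> (\<exists>A\<in>V. regular_mv X A \<and> C \<subseteq> A)"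

definition essential :: "'a topology \<Rightarrow> 'a set set \<Rightarrow> (int \<Rightarrow> 'a) \<Rightarrow> bool" where
  "essential X V \<gamma> \<longleftrightarrow> full_solution X V \<gamma> \<and>
     \<not> (in_single_regular_mv X V (alpha_limit X V \<gamma>) \<or>
        in_single_regular_mv X V (omega_limit X V \<gamma>))"

definition Inv :: "'a topology \<Rightarrow> 'a set set \<Rightarrow> 'a set \<Rightarrow> 'a set" where
  "Inv X V S = {x \<in> S. \<exists>\<gamma>. essential X V \<gamma> \<and> range \<gamma> \<subseteq> S \<and> \<gamma> 0 = x}"

definition invariant :: "'a topology \<Rightarrow> 'a set set \<Rightarrow> 'a set \<Rightarrow> bool" where
  "invariant X V S \<longleftrightarrow> Inv X V S = S"

definition isolated_invariant :: "'a topology \<Rightarrow> 'a set set \<Rightarrow> 'a set \<Rightarrow> bool" where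
  "isolated_invariant X V S \<longleftrightarrow> invariant X V S \<and>
     (\<exists>N. closedin X N \<and> Pi_mv_set X V S \<subseteq> N \<and>
        (\<forall>\<gamma> a b. is_path X V \<gamma> a b \<and> \<gamma> ` {a..b} \<subseteq> N \<and> \<gamma> a \<in> S \<and> \<gamma> b \<in> S
                    \<longrightarrow> \<gamma> ` {a..b} \<subseteq> S))"

definition is_link :: "'a topology \<Rightarrow> 'a set set \<Rightarrow> (int \<Rightarrow> 'a) \<Rightarrow> 'a set \<Rightarrow> 'a set \<Rightarrow> bool" where
  "is_link X V \<gamma> S1 S2 \<longleftrightarrow> full_solution X V \<gamma> \<and>
     alpha_limit X V \<gamma> \<inter> S1 \<noteq> {} \<and> omega_limit X V \<gamma> \<inter> S2 \<noteq> {}"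

definition morse_predecomposition ::
  "'a topology \<Rightarrow> 'a set set \<Rightarrow> 'p set \<Rightarrow> ('p \<Rightarrow> 'a set) \<Rightarrow> bool" where
  "morse_predecomposition X V P M \<longleftrightarrow>
     (\<forall>p\<in>P. \<forall>q\<in>P. p \<noteq> q \<longrightarrow> M p \<inter> M q = {}) \<and>
     (\<forall>p\<in>P. M p \<subseteq> topspace X \<and> isolated_invariant X V (M p)) \<and>
     (\<forall>\<gamma>. essential X V \<gamma> \<and> range \<gamma> \<subseteq> topspace X \<longrightarrow>
        (\<exists>p\<in>P. \<exists>q\<in>P. is_link X V \<gamma> (M p) (M q)))"

definition admissible_preorder ::
  "'a topology \<Rightarrow> 'a set set \<Rightarrow> 'p set \<Rightarrow> ('p \<Rightarrow> 'a set) \<Rightarrow> ('p \<Rightarrow> 'p \<Rightarrow> bool) \<Rightarrow> bool" where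
  "admissible_preorder X V P M leq \<longleftrightarrow>
     (\<forall>p\<in>P. leq p p) \<and>
     (\<forall>p\<in>P. \<forall>q\<in>P. \<forall>r\<in>P. leq p q \<and> leq q r \<longrightarrow> leq p r) \<and>
     (\<forall>p\<in>P. \<forall>q\<in>P. (\<exists>\<gamma>. is_link X V \<gamma> (M p) (M q)) \<longrightarrow> leq q p)"

definition convex_wrt :: "'p set \<Rightarrow> ('p \<Rightarrow> 'p \<Rightarrow> bool) \<Rightarrow> 'p set \<Rightarrow> bool" where
  "convex_wrt P leq Q \<longleftrightarrow> (\<forall>p\<in>Q. \<forall>q\<in>Q. \<forall>r\<in>P. leq p r \<and> leq r q \<longrightarrow> r \<in> Q)"

definition saturated :: "'a topology \<Rightarrow> 'a set set \<Rightarrow> 'a set \<Rightarrow> bool" where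
  "saturated X V T \<longleftrightarrow> T \<subseteq> topspace X \<and> invariant X V T \<and>
     (\<forall>\<gamma>. essential X V \<gamma> \<and> range \<gamma> \<subseteq> topspace X \<and>
          alpha_limit X V \<gamma> \<union> omega_limit X V \<gamma> \<subseteq> T \<longrightarrow> range \<gamma> \<subseteq> T)"

definition P_meet :: "'p set \<Rightarrow> ('p \<Rightarrow> 'a set) \<Rightarrow> 'a set \<Rightarrow> 'p set" where
  "P_meet P M C = {p \<in> P. M p \<inter> C \<noteq> {}}"

definition eSol :: "'a topology \<Rightarrow> 'a set set \<Rightarrow> 'p set \<Rightarrow> ('p \<Rightarrow> 'a set) \<Rightarrow> 'p set \<Rightarrow> (int \<Rightarrow> 'a) set" where
  "eSol X V P M Q = {\<gamma>. essential X V \<gamma> \<and> range \<gamma> \<subseteq> topspace X \<and>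
      P_meet P M (alpha_limit X V \<gamma>) \<inter> Q \<noteq> {} \<and> P_meet P M (omega_limit X V \<gamma>) \<inter> Q \<noteq> {}}"

definition M_Q :: "'a topology \<Rightarrow> 'a set set \<Rightarrow> 'p set \<Rightarrow> ('p \<Rightarrow> 'a set) \<Rightarrow> 'p set \<Rightarrow> 'a set" where
  "M_Q X V P M Q = (\<Union>\<gamma>\<in>eSol X V P M Q. range \<gamma>)"

end

theory Submission
  imports Defs
begin

definition LA :: "(int \<Rightarrow> 'a) \<Rightarrow> 'a set" where
  "LA g = {x. \<forall>t. \<exists>u\<le>t. g u = x}"

definition LW :: "(int \<Rightarrow> 'a) \<Rightarrow> 'a set" where
  "LW g = {x. \<forall>t. \<exists>u\<ge>t. g u = x}"

lemma alpha_LA: "alpha_limit X V g = lc_hull X V (LA g)"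
proof -
  have "(\<Inter>t\<in>{..0}. g ` {..t}) = LA g"
  proof (intro equalityI subsetI)
    fix x assume "x \<in> (\<Inter>t\<in>{..0}. g ` {..t})"
    then have h: "\<forall>t\<le>0. \<exists>u\<le>t. g u = x" by (auto simp: image_iff)
    show "x \<in> LA g" unfolding LA_def
    proof (intro CollectI allI)
      fix t
      obtain u where "u \<le> min t 0" "g u = x" using h[rule_format, of "min t 0"] by auto
      then show "\<exists>u\<le>t. g u = x" by (intro exI[of _ u]) auto
    qed
  next
    fix x assume "x \<in> LA g"
    then show "x \<in> (\<Inter>t\<in>{..0}. g ` {..t})" unfolding LA_def by (auto simp: image_iff)
  qed
  then show ?thesis unfolding alpha_limit_def by simp
qed

lemma omega_LW: "omega_limit X V g = lc_hull X V (LW g)"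
proof -
  have "(\<Inter>t\<in>{0..}. g ` {t..}) = LW g"
  proof (intro equalityI subsetI)
    fix x assume "x \<in> (\<Inter>t\<in>{0..}. g ` {t..})"
    then have h: "\<forall>t\<ge>0. \<exists>u\<ge>t. g u = x" by (auto simp: image_iff)
    show "x \<in> LW g" unfolding LW_def
    proof (intro CollectI allI)
      fix t
      obtain u where "u \<ge> max t 0" "g u = x" using h[rule_format, of "max t 0"] by auto
      then show "\<exists>u\<ge>t. g u = x" by (intro exI[of _ u]) auto
    qed
  next
    fix x assume "x \<in> LW g"
    then show "x \<in> (\<Inter>t\<in>{0..}. g ` {t..})" unfolding LW_def by (auto simp: image_iff)
  qed
  then show ?thesis unfolding omega_limit_def by simp
qed

lemma LA_cong:
  assumes "\<forall>t\<le>a. g t = r (t + c)"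
  shows "LA g = LA r"
proof (intro equalityI subsetI)
  fix x assume "x \<in> LA g"
  then have h: "\<forall>t. \<exists>u\<le>t. g u = x" by (simp add: LA_def)
  show "x \<in> LA r" unfolding LA_def
  proof (intro CollectI allI)
    fix t
    obtain u where u: "u \<le> min (t - c) a" "g u = x" using h by blast
    then have "r (u + c) = x" using assms by auto
    then show "\<exists>u\<le>t. r u = x" using u by (intro exI[of _ "u + c"]) auto
  qed
next
  fix x assume "x \<in> LA r"
  then have h: "\<forall>t. \<exists>u\<le>t. r u = x" by (simp add: LA_def)
  show "x \<in> LA g" unfolding LA_def
  proof (intro CollectI allI)
    fix t
    obtain v where v: "v \<le> min (t + c) (a + c)" "r v = x" using h by blast
    then have "g (v - c) = x" using assms by auto
    then show "\<exists>u\<le>t. g u = x" using v by (intro exI[of _ "v - c"]) auto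
  qed
qed

lemma LW_cong:
  assumes "\<forall>t\<ge>a. g t = r (t + c)"
  shows "LW g = LW r"
proof (intro equalityI subsetI)
  fix x assume "x \<in> LW g"
  then have h: "\<forall>t. \<exists>u\<ge>t. g u = x" by (simp add: LW_def)
  show "x \<in> LW r" unfolding LW_def
  proof (intro CollectI allI)
    fix t
    obtain u where u: "u \<ge> max (t - c) a" "g u = x" using h by blast
    then have "r (u + c) = x" using assms by auto
    then show "\<exists>u\<ge>t. r u = x" using u by (intro exI[of _ "u + c"]) auto
  qed
next
  fix x assume "x \<in> LW r"
  then have h: "\<forall>t. \<exists>u\<ge>t. r u = x" by (simp add: LW_def)
  show "x \<in> LW g" unfolding LW_def
  proof (intro CollectI allI)
    fix t
    obtain v where v: "v \<ge> max (t + c) (a + c)" "r v = x" using h by blast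
    then have "g (v - c) = x" using assms by auto
    then show "\<exists>u\<ge>t. g u = x" using v by (intro exI[of _ "v - c"]) auto
  qed
qed

lemma LA_nonempty:
  assumes "finite S" "range g \<subseteq> S"
  shows "LA g \<noteq> {}"
proof
  assume e: "LA g = {}"
  have "\<forall>x. \<exists>t. \<forall>u\<le>t. g u \<noteq> x"
  proof
    fix x show "\<exists>t. \<forall>u\<le>t. g u \<noteq> x" using e unfolding LA_def by blast
  qed
  then obtain f where f: "\<And>x u. u \<le> f x \<Longrightarrow> g u \<noteq> x" by metis
  define m where "m = Min (f ` S)"
  have "g m \<in> S" using assms by auto
  then have "m \<le> f (g m)" unfolding m_def using assms by auto
  then show False using f by blast
qed

lemma LW_nonempty:
  assumes "finite S" "range g \<subseteq> S"
  shows "LW g \<noteq> {}"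
proof
  assume e: "LW g = {}"
  have "\<forall>x. \<exists>t. \<forall>u\<ge>t. g u \<noteq> x"
  proof
    fix x show "\<exists>t. \<forall>u\<ge>t. g u \<noteq> x" using e unfolding LW_def by blast
  qed
  then obtain f where f: "\<And>x u. u \<ge> f x \<Longrightarrow> g u \<noteq> x" by metis
  define m where "m = Max (f ` S)"
  have "g m \<in> S" using assms by auto
  then have "m \<ge> f (g m)" unfolding m_def using assms by auto
  then show False using f by blast
qed

lemma LA_range: "LA g \<subseteq> range g" unfolding LA_def by auto
lemma LW_range: "LW g \<subseteq> range g" unfolding LW_def by auto

lemma lc_hull_sup: "A \<subseteq> lc_hull X V A" unfolding lc_hull_def by auto

definition cat :: "(int \<Rightarrow> 'a) \<Rightarrow> int \<Rightarrow> (int \<Rightarrow> 'a) \<Rightarrow> int \<Rightarrow> int \<Rightarrow> (int \<Rightarrow> 'a) \<Rightarrow> int \<Rightarrow> int \<Rightarrow> 'a" where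
  "cat r s g a b q u = (\<lambda>t. if t \<le> a then r (t - a + s) else if t \<le> b then g t else q (t - b + u))"

lemma cat_LA: "LA (cat r s g a b q u) = LA r"
  by (rule LA_cong[where a=a and c="s - a"]) (auto simp: cat_def algebra_simps)

lemma cat_LW: "a \<le> b \<Longrightarrow> LW (cat r s g a b q u) = LW q"
  by (rule LW_cong[where a="b+1" and c="u - b"]) (auto simp: cat_def algebra_simps)

lemma cat_full:
  assumes "full_solution X V r" "full_solution X V q" "is_path X V g a b"
    "r s = g a" "g b = q u"
  shows "full_solution X V (cat r s g a b q u)"
  unfolding full_solution_def
proof
  fix t
  have ab: "a \<le> b" using assms(3) by (simp add: is_path_def)
  have rr: "\<And>t. r t \<in> topspace X \<and> r (t + 1) \<in> Pi_mv X V (r t)"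
    using assms(1) by (simp add: full_solution_def)
  have qq: "\<And>t. q t \<in> topspace X \<and> q (t + 1) \<in> Pi_mv X V (q t)"
    using assms(2) by (simp add: full_solution_def)
  have gg: "\<And>t. a \<le> t \<Longrightarrow> t \<le> b \<Longrightarrow> g t \<in> topspace X"
    "\<And>t. a \<le> t \<Longrightarrow> t < b \<Longrightarrow> g (t + 1) \<in> Pi_mv X V (g t)"
    using assms(3) by (auto simp: is_path_def)
  consider "t + 1 \<le> a" | "a \<le> t" "t < b" | "b \<le> t" using ab by linarith
  then show "cat r s g a b q u t \<in> topspace X \<and>
    cat r s g a b q u (t + 1) \<in> Pi_mv X V (cat r s g a b q u t)"
  proof cases
    case 1
    have e: "t + 1 - a + s = (t - a + s) + 1" by simp
    show ?thesis using 1 rr[of "t - a + s"] unfolding cat_def e by auto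
  next
    case 2
    have c1: "cat r s g a b q u t = g t" using 2 assms(4) by (auto simp: cat_def)
    have c2: "cat r s g a b q u (t+1) = g (t+1)" using 2 by (auto simp: cat_def)
    show ?thesis unfolding c1 c2 using 2 gg by auto
  next
    case 3
    have c1: "cat r s g a b q u t = q (t - b + u)" using 3 ab assms(4,5)
      by (auto simp: cat_def)
    have c2: "cat r s g a b q u (t+1) = q ((t - b + u) + 1)" using 3 ab
      by (auto simp: cat_def algebra_simps)
    show ?thesis unfolding c1 c2 using qq by auto
  qed
qed

lemma cat_ess:
  assumes "essential X V r" "essential X V q" "is_path X V g a b"
    "r s = g a" "g b = q u"
  shows "essential X V (cat r s g a b q u)"
proof -
  have ab: "a \<le> b" using assms(3) by (simp add: is_path_def)
  have "alpha_limit X V (cat r s g a b q u) = alpha_limit X V r"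
    by (simp add: alpha_LA cat_LA)
  moreover have "omega_limit X V (cat r s g a b q u) = omega_limit X V q"
    using ab by (simp add: omega_LW cat_LW)
  moreover have "full_solution X V (cat r s g a b q u)"
    using assms(3-5) by (rule cat_full[OF assms(1,2)[unfolded essential_def, THEN conjunct1]])
  ultimately show ?thesis using assms(1,2) unfolding essential_def by simp
qed

lemma cat_eSol:
  assumes "r \<in> eSol X V P M Q" "q \<in> eSol X V P M Q" "is_path X V g a b"
    "r s = g a" "g b = q u"
  shows "cat r s g a b q u \<in> eSol X V P M Q"
proof -
  have ab: "a \<le> b" using assms(3) by (simp add: is_path_def)
  have "alpha_limit X V (cat r s g a b q u) = alpha_limit X V r"
    by (simp add: alpha_LA cat_LA)
  moreover have "omega_limit X V (cat r s g a b q u) = omega_limit X V q"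
    using ab by (simp add: omega_LW cat_LW)
  moreover have e: "essential X V (cat r s g a b q u)"
    using assms(3-5) by (rule cat_ess[OF assms(1,2)[unfolded eSol_def, simplified, THEN conjunct1]])
  moreover have "range (cat r s g a b q u) \<subseteq> topspace X"
    using e unfolding essential_def full_solution_def by auto
  ultimately show ?thesis using assms(1,2) unfolding eSol_def by simp
qed

lemma cat_range1:
  assumes "is_path X V g a b" "r s = g a"
  shows "g ` {a..b} \<subseteq> range (cat r s g a b q u)"
proof
  fix y assume "y \<in> g ` {a..b}"
  then obtain t where t: "a \<le> t" "t \<le> b" "y = g t" by auto
  have "cat r s g a b q u t = y" using t assms(2) by (cases "t = a") (auto simp: cat_def)
  then show "y \<in> range (cat r s g a b q u)" by (metis rangeI)
qed

lemma cat_range2: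
  "range (cat r s g a b q u) \<subseteq> range r \<union> g ` {a..b} \<union> range q"
  by (auto simp: cat_def)

lemma path_const: "x \<in> topspace X \<Longrightarrow> is_path X V (\<lambda>_. x) 0 0"
  by (simp add: is_path_def)

lemma path_full: "full_solution X V g \<Longrightarrow> a \<le> b \<Longrightarrow> is_path X V g a b"
  by (simp add: is_path_def full_solution_def)

lemma eSol_range: "g \<in> eSol X V P M Q \<Longrightarrow> range g \<subseteq> M_Q X V P M Q"
  unfolding M_Q_def by auto

lemma eSol_ess: "g \<in> eSol X V P M Q \<Longrightarrow> essential X V g"
  unfolding eSol_def by auto

lemma ess_full: "essential X V g \<Longrightarrow> full_solution X V g"
  unfolding essential_def by auto

lemma full_top: "full_solution X V g \<Longrightarrow> g t \<in> topspace X"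
  unfolding full_solution_def by auto

lemma MQ_inv: "invariant X V (M_Q X V P M Q)"
  unfolding invariant_def Inv_def
proof (intro equalityI subsetI)
  fix x assume "x \<in> {x \<in> M_Q X V P M Q. \<exists>\<gamma>. essential X V \<gamma> \<and> range \<gamma> \<subseteq> M_Q X V P M Q \<and> \<gamma> 0 = x}"
  then show "x \<in> M_Q X V P M Q" by simp
next
  fix x assume "x \<in> M_Q X V P M Q"
  then obtain g t where g: "g \<in> eSol X V P M Q" "g t = x" unfolding M_Q_def by auto
  define h where "h = cat g t (\<lambda>_. x) 0 0 g t"
  have xt: "x \<in> topspace X" using g full_top ess_full eSol_ess by metis
  have "essential X V h" unfolding h_def
    by (rule cat_ess) (use g eSol_ess path_const xt in auto)
  moreover have "range h \<subseteq> M_Q X V P M Q"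
    using cat_range2[of g t "\<lambda>_. x" 0 0 g t] eSol_range[OF g(1)] g(2) \<open>x \<in> M_Q X V P M Q\<close>
    unfolding h_def by auto
  moreover have "h 0 = x" unfolding h_def cat_def using g by simp
  ultimately show "x \<in> {x \<in> M_Q X V P M Q. \<exists>\<gamma>. essential X V \<gamma> \<and> range \<gamma> \<subseteq> M_Q X V P M Q \<and> \<gamma> 0 = x}"
    using \<open>x \<in> M_Q X V P M Q\<close> by blast
qed

lemma MQ_top: "M_Q X V P M Q \<subseteq> topspace X"
  unfolding M_Q_def eSol_def by auto

lemma MQ_sat:
  assumes fin: "finite (topspace X)"
  shows "saturated X V (M_Q X V P M Q)"
  unfolding saturated_def
proof (intro conjI allI impI MQ_top MQ_inv)
  fix g assume a: "essential X V g \<and> range g \<subseteq> topspace X \<and>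
        alpha_limit X V g \<union> omega_limit X V g \<subseteq> M_Q X V P M Q"
  have a1: "essential X V g" and a2: "range g \<subseteq> topspace X"
    and a3: "alpha_limit X V g \<subseteq> M_Q X V P M Q" and a4: "omega_limit X V g \<subseteq> M_Q X V P M Q"
    using a by auto
  have LAs: "LA g \<subseteq> M_Q X V P M Q" using a3 lc_hull_sup[of "LA g" X V] unfolding alpha_LA by (rule order_trans[rotated])
  have LWs: "LW g \<subseteq> M_Q X V P M Q" using a4 lc_hull_sup[of "LW g" X V] unfolding omega_LW by (rule order_trans[rotated])
  show "range g \<subseteq> M_Q X V P M Q"
  proof
    fix y assume "y \<in> range g"
    then obtain \<tau> where y: "y = g \<tau>" by auto
    obtain x0 where x0: "x0 \<in> LA g" using LA_nonempty[OF fin a2] by blast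
    obtain y0 where y0: "y0 \<in> LW g" using LW_nonempty[OF fin a2] by blast
    have "x0 \<in> M_Q X V P M Q" using x0 LAs by (rule subsetD[rotated])
    then obtain r s where r: "r \<in> eSol X V P M Q" "r s = x0" unfolding M_Q_def by auto
    have "y0 \<in> M_Q X V P M Q" using y0 LWs by (rule subsetD[rotated])
    then obtain q u where q: "q \<in> eSol X V P M Q" "q u = y0" unfolding M_Q_def by auto
    obtain t where t: "t \<le> \<tau>" "g t = x0" using x0 unfolding LA_def by blast
    obtain t' where t': "t' \<ge> \<tau>" "g t' = y0" using y0 unfolding LW_def by blast
    have p: "is_path X V g t t'"
      by (rule path_full[OF ess_full[OF a1]]) (use t t' in linarith)
    have "cat r s g t t' q u \<in> eSol X V P M Q"
      by (rule cat_eSol[OF r(1) q(1) p]) (use r q t t' in auto)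
    moreover have "y \<in> range (cat r s g t t' q u)"
    proof -
      have "y \<in> g ` {t..t'}" using y t t' by auto
      then show ?thesis using cat_range1[OF p, of r s q u] r t by auto
    qed
    ultimately show "y \<in> M_Q X V P M Q" unfolding M_Q_def by auto
  qed
qed

lemma mv_of_top:
  assumes "multivector_field X V" "x \<in> topspace X"
  shows "mv_of V x \<subseteq> topspace X"
proof -
  have m1: "\<forall>A\<in>V. A \<subseteq> topspace X" and m2: "\<forall>A\<in>V. \<forall>B\<in>V. A \<noteq> B \<longrightarrow> A \<inter> B = {}"
    and m3: "\<Union>V = topspace X"
    using assms(1) unfolding multivector_field_def by auto
  obtain A where A: "A \<in> V" "x \<in> A" using m3 assms(2) by blast
  have ex: "\<exists>!A. A \<in> V \<and> x \<in> A"
  proof (rule ex1I[of _ A])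
    show "A \<in> V \<and> x \<in> A" using A by simp
    fix B assume "B \<in> V \<and> x \<in> B"
    then show "B = A" using m2 A by blast
  qed
  show ?thesis unfolding mv_of_def
    by (rule the1I2[OF ex]) (use m1 in blast)
qed

lemma MQ_iso:
  assumes "multivector_field X V"
  shows "isolated_invariant X V (M_Q X V P M Q)"
  unfolding isolated_invariant_def
proof (intro conjI MQ_inv exI[of _ "topspace X"] allI impI)
  show "closedin X (topspace X)" by simp
  show "Pi_mv_set X V (M_Q X V P M Q) \<subseteq> topspace X"
    unfolding Pi_mv_set_def Pi_mv_def
  proof (rule UN_least)
    fix x assume "x \<in> M_Q X V P M Q"
    then have "x \<in> topspace X" using MQ_top[of X V P M Q] by (rule subsetD[rotated])
    then show "X closure_of {x} \<union> mv_of V x \<subseteq> topspace X"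
      using mv_of_top[OF assms] closure_of_subset_topspace by (metis Un_least)
  qed
next
  fix g a b assume h: "is_path X V g a b \<and> g ` {a..b} \<subseteq> topspace X \<and>
    g a \<in> M_Q X V P M Q \<and> g b \<in> M_Q X V P M Q"
  then obtain r s where r: "r \<in> eSol X V P M Q" "r s = g a" unfolding M_Q_def by auto
  obtain q u where q: "q \<in> eSol X V P M Q" "q u = g b" using h unfolding M_Q_def by auto
  have "cat r s g a b q u \<in> eSol X V P M Q"
    by (rule cat_eSol) (use r q h in auto)
  moreover have "g ` {a..b} \<subseteq> range (cat r s g a b q u)"
    using h r(2) by (intro cat_range1) auto
  ultimately show "g ` {a..b} \<subseteq> M_Q X V P M Q"
    using eSol_range by blast
qed

theorem lemma4p12:
  fixes X :: "'a topology" and V :: "'a set set"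
    and P :: "'p set" and M :: "'p \<Rightarrow> 'a set" and leq :: "'p \<Rightarrow> 'p \<Rightarrow> bool"
  assumes "finite (topspace X)" and "t0_space X"
    and "multivector_field X V"
    and "invariant X V (topspace X)"
    and "morse_predecomposition X V P M"
    and "admissible_preorder X V P M leq"
  shows "(\<forall>Q. Q \<subseteq> P \<longrightarrow> saturated X V (M_Q X V P M Q) \<and> isolated_invariant X V (M_Q X V P M Q)) \<and>
         (\<forall>Q. Q \<subseteq> P \<and> convex_wrt P leq Q \<longrightarrow> (\<forall>r\<in>P - Q. M_Q X V P M Q \<inter> M r = {}))"
proof (intro conjI allI impI ballI)
  fix Q :: "'p set"
  show "saturated X V (M_Q X V P M Q)" using MQ_sat assms(1) by blast
  show "isolated_invariant X V (M_Q X V P M Q)" using MQ_iso assms(3) by blast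
next
  fix Q :: "'p set" and r
  assume Q: "Q \<subseteq> P \<and> convex_wrt P leq Q" and r: "r \<in> P - Q"
  show "M_Q X V P M Q \<inter> M r = {}"
  proof (rule ccontr)
    assume "M_Q X V P M Q \<inter> M r \<noteq> {}"
    then obtain x where x: "x \<in> M_Q X V P M Q" "x \<in> M r" by auto
    then obtain g \<tau> where g: "g \<in> eSol X V P M Q" "g \<tau> = x" unfolding M_Q_def by auto
    have "invariant X V (M r)" using assms(5) r
      unfolding morse_predecomposition_def isolated_invariant_def by auto
    then have "x \<in> Inv X V (M r)" using x unfolding invariant_def by simp
    then obtain e where e: "essential X V e" "range e \<subseteq> M r" "e 0 = x"
      unfolding Inv_def by auto
    obtain p where p: "p \<in> Q" "p \<in> P" "M p \<inter> alpha_limit X V g \<noteq> {}"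
      using g unfolding eSol_def P_meet_def by auto
    obtain q where q: "q \<in> Q" "q \<in> P" "M q \<inter> omega_limit X V g \<noteq> {}"
      using g unfolding eSol_def P_meet_def by auto
    have xt: "x \<in> topspace X" using g full_top ess_full eSol_ess by metis
    have fg: "full_solution X V g" using g eSol_ess ess_full by blast
    have fe: "full_solution X V e" using e ess_full by blast
    have ret: "range e \<subseteq> topspace X" using fe full_top by blast
    define g1 where "g1 = cat g \<tau> (\<lambda>_. x) 0 0 e 0"
    have "full_solution X V g1" unfolding g1_def
      by (rule cat_full) (use fg fe g e path_const xt in auto)
    moreover have "alpha_limit X V g1 = alpha_limit X V g"
      unfolding g1_def by (simp add: alpha_LA cat_LA)
    moreover have "omega_limit X V g1 = omega_limit X V e"
      unfolding g1_def by (simp add: omega_LW cat_LW)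
    moreover have "omega_limit X V e \<inter> M r \<noteq> {}"
      using LW_nonempty[OF assms(1) ret] LW_range[of e] e(2) lc_hull_sup[of "LW e" X V]
      unfolding omega_LW by blast
    ultimately have "is_link X V g1 (M p) (M r)" using p unfolding is_link_def by blast
    then have l1: "leq r p" using assms(6) p r unfolding admissible_preorder_def by blast
    define g2 where "g2 = cat e 0 (\<lambda>_. x) 0 0 g \<tau>"
    have "full_solution X V g2" unfolding g2_def
      by (rule cat_full) (use fg fe g e path_const xt in auto)
    moreover have "alpha_limit X V g2 = alpha_limit X V e"
      unfolding g2_def by (simp add: alpha_LA cat_LA)
    moreover have "omega_limit X V g2 = omega_limit X V g"
      unfolding g2_def by (simp add: omega_LW cat_LW)
    moreover have "alpha_limit X V e \<inter> M r \<noteq> {}"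
      using LA_nonempty[OF assms(1) ret] LA_range[of e] e(2) lc_hull_sup[of "LA e" X V]
      unfolding alpha_LA by blast
    ultimately have "is_link X V g2 (M r) (M q)" using q unfolding is_link_def by blast
    then have l2: "leq q r" using assms(6) q r unfolding admissible_preorder_def by blast
    have "r \<in> Q" using Q l1 l2 p q r unfolding convex_wrt_def by blast
    then show False using r by blast
  qed
qed

end
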